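(* For every $u\in\Sigma^*$ and $v\in\Sigma^+$ there is a finite automaton $\mathcal{D}_{u\$v}$ over $\Sigma\cup\{\$\}$ (with $\$\notin\Sigma$) with $L(\mathcal{D}_{u\$v})=\{u'\$v'\mid u'\in\Sigma^*,\ v'\in\Sigma^+,\ u'v'^\omega=uv^\omega\}$ whose number of states is in $\mathcal{O}(|v|(|u|+|v|))$. *)

theory Defs
  imports Complex_Main
begin

record ('q, 'a) dfa =
  states :: "'q set"
  init   :: 'q
  delta  :: "'q \<Rightarrow> 'a \<Rightarrow> 'q"
  final  :: "'q set"

definition dfa_wf :: "'a set \<Rightarrow> ('q, 'a) dfa \<Rightarrow> bool" where
  "dfa_wf Alph A \<longleftrightarrow> finite (states A) \<and> init A \<in> states A \<and> final A \<subseteq> states A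
     \<and> (\<forall>q\<in>states A. \<forall>a\<in>Alph. delta A q a \<in> states A)"

definition dfa_run :: "('q, 'a) dfa \<Rightarrow> 'a list \<Rightarrow> 'q" where
  "dfa_run A w = foldl (delta A) (init A) w"

definition dfa_lang :: "'a set \<Rightarrow> ('q, 'a) dfa \<Rightarrow> 'a list set" where
  "dfa_lang Alph A = {w \<in> lists Alph. dfa_run A w \<in> final A}"

definition omega_word :: "'a list \<Rightarrow> 'a list \<Rightarrow> nat \<Rightarrow> 'a" where
  "omega_word u v i = (if i < length u then u ! i else v ! ((i - length u) mod length v))"

text \<open>The letter \$ is encoded as None, letters of Sigma as Some a.\<close>
definition dollar_word :: "'a list \<Rightarrow> 'a list \<Rightarrow> 'a option list" where
  "dollar_word u v = map Some u @ [None] @ map Some v"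

end

theory Submission
  imports Defs "HOL-Library.Countable"
begin

datatype st = Sink | Pre nat | Post nat nat bool

instance st :: countable by countable_datatype

lemma run_map: "inj f \<Longrightarrow> foldl (\<lambda>m a. f (d (inv f m) a)) (f q) w = f (foldl d q w)"
  by (induction w arbitrary: q) auto

definition enc :: "(st,'b) dfa \<Rightarrow> (nat,'b) dfa" where
 "enc A = \<lparr>states = to_nat ` states A, init = to_nat (init A),
    delta = (\<lambda>m a. to_nat (delta A (inv to_nat m) a)), final = to_nat ` final A\<rparr>"

lemma enc_wf: "dfa_wf Alph A \<Longrightarrow> dfa_wf Alph (enc A)"
  unfolding dfa_wf_def enc_def by auto

lemma enc_lang: "dfa_lang Alph (enc A) = dfa_lang Alph A"
  unfolding dfa_lang_def dfa_run_def enc_def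
  using run_map[of to_nat "delta A" "init A"] by (simp add: inj_image_mem_iff)

lemma enc_card: "card (states (enc A)) = card (states A)"
  by (simp add: enc_def card_image)

lemma per_gen: fixes g :: "nat \<Rightarrow> 'b" and m :: nat shows "(\<forall>t. g (j+q+t) = g (j+t)) \<Longrightarrow> g (j + m*q + t) = g (j+t)"
proof (induction m arbitrary: t)
  case 0 then show ?case by simp
next
  case (Suc m)
  have "g (j + Suc m * q + t) = g (j + q + (m*q + t))" by (simp add: algebra_simps)
  also have "\<dots> = g (j + m*q + t)" using Suc.prems by (simp add: add.assoc)
  finally show ?case using Suc by simp
qed

lemma per_mod: fixes g :: "nat \<Rightarrow> 'b" and r :: nat shows "(\<forall>t. g (j+q+t) = g (j+t)) \<Longrightarrow> g (j + r) = g (j + r mod q)"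
proof -
  assume a: "\<forall>t. g (j+q+t) = g (j+t)"
  have "r = r div q * q + r mod q" by simp
  then have "g (j + r) = g (j + (r div q) * q + r mod q)" by (metis add.assoc)
  also have "\<dots> = g (j + r mod q)" by (rule per_gen[OF a])
  finally show ?thesis .
qed

lemma map_the: "None \<notin> set z \<Longrightarrow> z = map Some (map the z)"
  by (induction z) auto

lemma lists_Some: "map Some x \<in> lists (insert None (Some ` S)) \<Longrightarrow> x \<in> lists S"
  by (induction x) auto

lemma ow1: "t < length x \<Longrightarrow> omega_word x y t = x!t"
  by (simp add: omega_word_def)

lemma ow2: "omega_word x y (length x + t) = y!(t mod length y)"
  by (simp add: omega_word_def)

locale per = fixes u v :: "'a list" assumes vne: "v \<noteq> []"
begin

abbreviation "w \<equiv> omega_word u v"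

definition cls :: "nat \<Rightarrow> nat" where
  "cls i = (if i < length u then i else length u + (i - length u) mod length v)"

definition sh :: "nat \<Rightarrow> nat \<Rightarrow> 'a" where "sh i = (\<lambda>t. w (i+t))"

lemma p_pos: "0 < length v" using vne by simp

lemma w_eq: "length u \<le> i \<Longrightarrow> length u \<le> j \<Longrightarrow>
   (i - length u) mod length v = (j - length u) mod length v \<Longrightarrow> w i = w j"
  by (simp add: omega_word_def)

lemma cls_lt: "cls i < length u + length v"
  using p_pos by (auto simp: cls_def)

lemma cls_0: "cls 0 = 0" by (simp add: cls_def)

lemma w_cls_t: "w (cls i + t) = w (i + t)"
proof (cases "i < length u")
  case True then show ?thesis by (simp add: cls_def)
next
  case False
  show ?thesis unfolding cls_def using False
    by (intro w_eq) (auto simp: mod_add_left_eq)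
qed

lemma w_cls: "w (cls i) = w i" using w_cls_t[of i 0] by simp

lemma sh_cls: "sh (cls i) = sh i" by (simp add: sh_def w_cls_t fun_eq_iff)

lemma cls_cls: "cls (cls i + m) = cls (i + m)"
  by (auto simp: cls_def mod_add_left_eq)

lemma w_mod: "w (length u + (k + m) mod length v + t) = w (length u + k + m + t)"
  by (intro w_eq) (auto simp: mod_add_left_eq add.assoc)

lemma sh_mod: "sh (length u + (k + m) mod length v) = sh (length u + k + m)"
  by (simp add: sh_def fun_eq_iff w_mod)

definition dl :: "st \<Rightarrow> 'a option \<Rightarrow> st" where
"dl s a = (case s of Sink \<Rightarrow> Sink
  | Pre c \<Rightarrow> (case a of Some b \<Rightarrow> if b = w c then Pre (cls (c+1)) else Sink
        | None \<Rightarrow> if \<exists>e<length v. sh (length u+e) = sh c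
                  then Post (SOME e. e<length v \<and> sh (length u+e) = sh c) (SOME e. e<length v \<and> sh (length u+e) = sh c) False
                  else Sink)
  | Post e k f \<Rightarrow> (case a of Some b \<Rightarrow> if b = w (length u+k) then Post e ((k+1) mod length v) True else Sink
        | None \<Rightarrow> Sink))"

definition D :: "(st, 'a option) dfa" where
"D = \<lparr>states = insert Sink (Pre ` {..<length u+length v} \<union>
        (\<lambda>(e,k,f). Post e k f) ` ({..<length v} \<times> {..<length v} \<times> UNIV)),
      init = Pre 0, delta = dl,
      final = {Post e k True | e k. e<length v \<and> k<length v \<and> sh (length u+k) = sh (length u+e)}\<rparr>"

lemma run_sink: "foldl dl Sink x = Sink"
  by (induction x) (auto simp: dl_def)

lemma run_pre: "foldl dl (Pre (cls i)) (map Some x) =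
   (if \<forall>t<length x. x!t = w (i+t) then Pre (cls (i+length x)) else Sink)"
proof (induction x arbitrary: i)
  case Nil then show ?case by simp
next
  case (Cons a x)
  show ?case
  proof (cases "a = w i")
    case True
    have "dl (Pre (cls i)) (Some a) = Pre (cls (i+1))"
      using True cls_cls[of i 1] by (simp add: dl_def w_cls)
    then show ?thesis using Cons[of "i+1"] True
      by (simp add: All_less_Suc2 add.assoc)
  next
    case False
    have "dl (Pre (cls i)) (Some a) = Sink"
      using False by (simp add: dl_def w_cls)
    then show ?thesis using False run_sink by (force simp: All_less_Suc2)
  qed
qed

lemma run_post: "k < length v \<Longrightarrow> foldl dl (Post e k f) (map Some x) =
   (if \<forall>t<length x. x!t = w (length u+k+t) then Post e ((k+length x) mod length v) (f \<or> x \<noteq> []) else Sink)"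
proof (induction x arbitrary: k f)
  case Nil then show ?case by simp
next
  case (Cons a x)
  show ?case
  proof (cases "a = w (length u + k)")
    case True
    have "dl (Post e k f) (Some a) = Post e ((k+1) mod length v) True"
      using True by (simp add: dl_def)
    moreover have "(k+1) mod length v < length v" using p_pos by simp
    moreover have "\<And>t. w (length u + (k+1) mod length v + t) = w (length u + k + Suc t)"
      using w_mod[of k 1] by simp
    moreover have "((k+1) mod length v + length x) mod length v = (k + Suc (length x)) mod length v"
      by (simp add: mod_add_left_eq)
    ultimately show ?thesis using Cons.IH[of "(k+1) mod length v" True] True
      by (simp add: All_less_Suc2)
  next
    case False
    have "dl (Post e k f) (Some a) = Sink"
      using False by (simp add: dl_def)
    then show ?thesis using False run_sink by (force simp: All_less_Suc2)
  qed
qed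

lemma run_post_None: "k < length v \<Longrightarrow> foldl dl (Post e k f) (map Some x @ None # y) = Sink"
  using run_post[of k e f x] by (simp add: dl_def run_sink)

lemma D_wf: "dfa_wf Alph D"
proof -
  have fin: "finite (states D)" by (simp add: D_def)
  have ini: "init D \<in> states D" using p_pos by (simp add: D_def)
  have fi: "final D \<subseteq> states D" by (auto simp: D_def image_iff)
  have cl: "delta D q a \<in> states D" if qs: "q \<in> states D" for q a
  proof -
    consider "q = Sink" | c where "q = Pre c" "c < length u + length v"
      | e k f where "q = Post e k f" "e < length v" "k < length v"
      using qs unfolding D_def by auto
    then show ?thesis
    proof cases
      case 1 then show ?thesis by (simp add: D_def dl_def)
    next
      case 2
      show ?thesis
      proof (cases a)
        case None
        show ?thesis
        proof (cases "\<exists>e<length v. sh (length u+e) = sh c")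
          case True
          then have "(SOME e. e<length v \<and> sh (length u+e) = sh c) < length v"
            by (metis (mono_tags, lifting) someI_ex)
          then show ?thesis using 2 None True by (auto simp: D_def dl_def image_iff)
        qed (use 2 None in \<open>auto simp: D_def dl_def image_iff\<close>)
      qed (use 2 cls_lt in \<open>auto simp: D_def dl_def image_iff\<close>)
    next
      case 3 then show ?thesis using p_pos by (cases a) (auto simp: D_def dl_def image_iff)
    qed
  qed
  show ?thesis unfolding dfa_wf_def using fin ini fi cl by blast
qed

lemma D_card: "card (states D) \<le> 1 + (length u + length v) + length v * length v * 2"
proof -
  let ?A = "Pre ` {..<length u+length v}"
  let ?B = "(\<lambda>(e,k,f). Post e k f) ` ({..<length v} \<times> {..<length v} \<times> (UNIV::bool set))"
  have "card (states D) \<le> 1 + card (?A \<union> ?B)"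
    unfolding D_def by (simp add: card_insert_le_m1 card_insert_if)
  also have "card (?A \<union> ?B) \<le> card ?A + card ?B" by (rule card_Un_le)
  also have "card ?A \<le> length u + length v" using card_image_le[of "{..<length u+length v}" Pre] by simp
  also have "card ?B \<le> length v * length v * 2"
    using card_image_le[of "{..<length v} \<times> {..<length v} \<times> (UNIV::bool set)" "(\<lambda>(e,k,f). Post e k f)"]
    by (simp add: card_cartesian_product)
  finally show ?thesis by simp
qed

lemma sh_per_mod: "sh (j + q) = sh j \<Longrightarrow> w (j + r) = w (j + r mod q)"
  by (rule per_mod[of w j q r]) (simp add: sh_def fun_eq_iff)

lemma run_D: "dfa_run D z = foldl dl (Pre (cls 0)) z"
  by (simp add: dfa_run_def D_def cls_0)

lemma some_e:
  assumes "\<exists>e<length v. sh (length u+e) = sh c"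
  shows "(SOME e. e<length v \<and> sh (length u+e) = sh c) < length v \<and>
         sh (length u + (SOME e. e<length v \<and> sh (length u+e) = sh c)) = sh c"
  using someI_ex[OF assms[simplified Bex_def[symmetric]]] assms
  by (metis (mono_tags, lifting) someI_ex)

lemma D_lang_sub:
  assumes z: "z \<in> lists (insert None (Some ` S))" and fz: "dfa_run D z \<in> final D"
  shows "\<exists>u' v'. z = dollar_word u' v' \<and> u' \<in> lists S \<and> v' \<in> lists S \<and> v' \<noteq> [] \<and> omega_word u' v' = w"
proof (cases "None \<in> set z")
  case False
  then have zz: "z = map Some (map the z)" by (rule map_the)
  have "dfa_run D z = foldl dl (Pre (cls 0)) (map Some (map the z))" using zz run_D by metis
  then have "dfa_run D z \<notin> final D" using run_pre[of 0 "map the z"] by (simp add: D_def)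
  then show ?thesis using fz by blast
next
  case True
  then obtain z1 z2 where zs: "z = z1 @ None # z2" "None \<notin> set z1" by (meson split_list_first)
  define x1 where "x1 = map the z1"
  have z1: "z1 = map Some x1" using zs(2) map_the x1_def by blast
  let ?c = "cls (length x1)"
  have r1: "dfa_run D z = foldl dl (dl (foldl dl (Pre (cls 0)) (map Some x1)) None) z2"
    using run_D zs z1 by simp
  have c1: "\<forall>t<length x1. x1!t = w t"
  proof (rule ccontr)
    assume "\<not> ?thesis"
    then have "foldl dl (Pre (cls 0)) (map Some x1) = Sink" using run_pre[of 0 x1] by simp
    then have "dfa_run D z = Sink" using r1 by (simp add: dl_def run_sink)
    then show False using fz by (simp add: D_def)
  qed
  then have r2: "dfa_run D z = foldl dl (dl (Pre ?c) None) z2" using r1 run_pre[of 0 x1] by simp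
  have ex: "\<exists>e<length v. sh (length u+e) = sh ?c"
  proof (rule ccontr)
    assume "\<not> ?thesis"
    then have "dl (Pre ?c) None = Sink" by (auto simp: dl_def)
    then have "dfa_run D z = Sink" using r2 by (simp add: run_sink)
    then show False using fz by (simp add: D_def)
  qed
  define e where "e = (SOME e. e<length v \<and> sh (length u+e) = sh ?c)"
  have e: "e < length v" "sh (length u + e) = sh (length x1)"
    using some_e[OF ex] sh_cls unfolding e_def by auto
  have r3: "dfa_run D z = foldl dl (Post e e False) z2"
    using r2 ex by (simp add: dl_def e_def)
  have n2: "None \<notin> set z2"
  proof
    assume "None \<in> set z2"
    then obtain z3 z4 where "z2 = z3 @ None # z4" "None \<notin> set z3" by (meson split_list_first)
    then have "z2 = map Some (map the z3) @ None # z4" using map_the by metis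
    then have "dfa_run D z = Sink" using r3 run_post_None[OF e(1), of e False "map the z3" z4] by simp
    then show False using fz by (simp add: D_def)
  qed
  define x2 where "x2 = map the z2"
  have z2: "z2 = map Some x2" using n2 map_the x2_def by blast
  have r4: "dfa_run D z = foldl dl (Post e e False) (map Some x2)" using r3 z2 by simp
  have c2: "\<forall>t<length x2. x2!t = w (length u+e+t)"
  proof (rule ccontr)
    assume "\<not> ?thesis"
    then have "foldl dl (Post e e False) (map Some x2) = Sink" using run_post[OF e(1)] by simp
    then have "dfa_run D z = Sink" using r4 by simp
    then show False using fz by (simp add: D_def)
  qed
  have fin: "Post e ((e + length x2) mod length v) (x2 \<noteq> []) \<in> final D"
    using fz r4 run_post[OF e(1), of e False x2] c2 by simp
  then have x2ne: "x2 \<noteq> []"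
    and per2: "sh (length u + (e + length x2) mod length v) = sh (length u + e)"
    by (auto simp: D_def)
  have per3: "sh (length u + e + length x2) = sh (length u + e)"
    using per2 sh_mod[of e "length x2"] by simp
  have om: "omega_word x1 x2 = w"
  proof
    fix i
    show "omega_word x1 x2 i = w i"
    proof (cases "i < length x1")
      case True then show ?thesis using c1 by (simp add: omega_word_def)
    next
      case False
      define r where "r = i - length x1"
      have i: "i = length x1 + r" using False r_def by simp
      have "w i = sh (length x1) r" by (simp add: sh_def i)
      also have "\<dots> = w (length u + e + r)" using fun_cong[OF e(2), of r] by (simp add: sh_def)
      also have "\<dots> = w (length u + e + r mod length x2)" by (rule sh_per_mod[OF per3])
      also have "\<dots> = x2 ! (r mod length x2)" using c2 x2ne by simp
      finally show ?thesis using False r_def by (simp add: omega_word_def)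
    qed
  qed
  have "x1 \<in> lists S" "x2 \<in> lists S" using z zs z1 z2 lists_Some by auto
  then show ?thesis using zs z1 z2 om x2ne by (auto simp: dollar_word_def)
qed

lemma D_lang_sup:
  assumes a: "u' \<in> lists S" "v' \<in> lists S" "v' \<noteq> []" "omega_word u' v' = w"
  shows "dollar_word u' v' \<in> dfa_lang (insert None (Some ` S)) D"
proof -
  let ?q = "length v'"
  have qpos: "0 < ?q" using a(3) by simp
  have ww: "\<And>i. w i = omega_word u' v' i" using a(4) by simp
  have c1: "\<forall>t<length u'. u'!t = w t" unfolding ww by (simp add: ow1)
  have r1: "foldl dl (Pre (cls 0)) (map Some u') = Pre (cls (length u'))"
    using run_pre[of 0 u'] c1 by simp
  have wper: "\<forall>t. w (length u' + ?q + t) = w (length u' + t)"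
    unfolding ww by (simp add: ow2 add.assoc)
  have shp: "sh (length u' + ?q) = sh (length u')"
    using wper by (simp add: sh_def fun_eq_iff add.assoc)
  define i where "i = length u' + length u * ?q"
  have shi: "sh i = sh (length u')"
    using per_gen[OF wper] by (simp add: sh_def fun_eq_iff i_def mult.commute)
  have "length u * 1 \<le> length u * ?q" using qpos by (intro mult_le_mono2) linarith
  then have ige: "length u \<le> i" unfolding i_def mult_1_right by linarith
  have ci: "cls i = length u + (i - length u) mod length v" using ige by (simp add: cls_def)
  have ex: "\<exists>e<length v. sh (length u+e) = sh (cls (length u'))"
    using p_pos sh_cls[of i] ci shi sh_cls[of "length u'"]
    by (intro exI[of _ "(i - length u) mod length v"]) simp
  define e where "e = (SOME e. e<length v \<and> sh (length u+e) = sh (cls (length u')))"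
  have e: "e < length v" "sh (length u + e) = sh (length u')"
    using some_e[OF ex] sh_cls unfolding e_def by auto
  have r2: "dl (Pre (cls (length u'))) None = Post e e False"
    using ex by (simp add: dl_def e_def)
  have c2: "\<forall>t<?q. v'!t = w (length u+e+t)"
  proof (intro allI impI)
    fix t assume t: "t < ?q"
    have "w (length u+e+t) = w (length u' + t)" using fun_cong[OF e(2), of t] by (simp add: sh_def)
    also have "\<dots> = v'!t" using t unfolding ww by (simp add: ow2)
    finally show "v'!t = w (length u+e+t)" by simp
  qed
  have r3: "foldl dl (Post e e False) (map Some v') = Post e ((e + ?q) mod length v) True"
    using run_post[OF e(1), of e False v'] c2 a(3) by simp
  have sheq: "sh (length u + e + ?q) = sh (length u + e)"
  proof
    fix t
    have "sh (length u + e + ?q) t = sh (length u + e) (?q + t)" by (simp add: sh_def add.assoc)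
    also have "\<dots> = sh (length u') (?q + t)" using e(2) by simp
    also have "\<dots> = sh (length u' + ?q) t" by (simp add: sh_def add.assoc)
    also have "\<dots> = sh (length u + e) t" using shp e(2) by simp
    finally show "sh (length u + e + ?q) t = sh (length u + e) t" .
  qed
  have fin: "Post e ((e + ?q) mod length v) True \<in> final D"
    using e(1) p_pos sheq sh_mod[of e ?q] by (auto simp: D_def)
  have run: "dfa_run D (dollar_word u' v') = Post e ((e + ?q) mod length v) True"
    using run_D r1 r2 r3 by (simp add: dollar_word_def)
  have "dollar_word u' v' \<in> lists (insert None (Some ` S))"
    using a(1,2) by (auto simp: dollar_word_def)
  then show ?thesis using run fin by (simp add: dfa_lang_def)
qed

lemma D_lang: "dfa_lang (insert None (Some ` S)) D =
  {dollar_word u' v' | u' v'. u' \<in> lists S \<and> v' \<in> lists S \<and> v' \<noteq> [] \<and> omega_word u' v' = w}"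
  (is "?L = ?R")
proof
  show "?L \<subseteq> ?R"
    using D_lang_sub by (fastforce simp: dfa_lang_def)
  show "?R \<subseteq> ?L"
    using D_lang_sup by blast
qed

end


lemma bound_nat: "0 < (p::nat) \<Longrightarrow> 1 + (n + p) + p * p * 2 \<le> 4 * p * (n + p)"
proof -
  assume p: "0 < p"
  have a: "1 \<le> p * (n+p)" using p by (simp add: Suc_le_eq)
  have b: "n + p \<le> p * (n+p)" using p by simp
  have c: "p * p * 2 \<le> 2 * (p * (n+p))" by (simp add: algebra_simps)
  have "4 * p * (n + p) = 4 * (p * (n+p))" by simp
  then show ?thesis using a b c by linarith
qed

theorem proposition3:
  fixes \<Sigma> :: "'a set"
  assumes "finite \<Sigma>"
  shows "\<exists>C::real. \<forall>u v. u \<in> lists \<Sigma> \<longrightarrow> v \<in> lists \<Sigma> \<longrightarrow> v \<noteq> [] \<longrightarrow>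
     (\<exists>A :: (nat, 'a option) dfa.
        dfa_wf (insert None (Some ` \<Sigma>)) A \<and>
        dfa_lang (insert None (Some ` \<Sigma>)) A =
          {dollar_word u' v' | u' v'. u' \<in> lists \<Sigma> \<and> v' \<in> lists \<Sigma> \<and> v' \<noteq> [] \<and>
                                    omega_word u' v' = omega_word u v} \<and>
        real (card (states A)) \<le> C * real (length v) * real (length u + length v))"
proof (intro exI[of _ 4] allI impI)
  fix u v :: "'a list"
  assume "u \<in> lists \<Sigma>" "v \<in> lists \<Sigma>" and vne: "v \<noteq> []"
  interpret P: per u v using vne by unfold_locales
  let ?A = "enc P.D"
  have "card (states ?A) \<le> 4 * length v * (length u + length v)"
    using P.D_card bound_nat[of "length v" "length u"] vne enc_card[of P.D] by simp
  then have "real (card (states ?A)) \<le> real (4 * length v * (length u + length v))"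
    by linarith
  then have "real (card (states ?A)) \<le> 4 * real (length v) * real (length u + length v)"
    by simp
  then show "\<exists>A :: (nat, 'a option) dfa.
        dfa_wf (insert None (Some ` \<Sigma>)) A \<and>
        dfa_lang (insert None (Some ` \<Sigma>)) A =
          {dollar_word u' v' | u' v'. u' \<in> lists \<Sigma> \<and> v' \<in> lists \<Sigma> \<and> v' \<noteq> [] \<and>
                                    omega_word u' v' = omega_word u v} \<and>
        real (card (states A)) \<le> 4 * real (length v) * real (length u + length v)"
    using enc_wf[OF P.D_wf] enc_lang P.D_lang by blast
qed

end
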